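(* Let $(r_I)_I$ be a family of idempotent functions $r_I:[0,1]^I\times[0,1]\to[0,1]^I\times[0,1]$ (one for each finite set of names $I$) satisfying (1) $r_I(u,z)=(u,z)$ iff $\partial_I u=1$ or $z=0$, and (2) $r_J(f\times\mathrm{id})r_I=r_J(f\times\mathrm{id})$ for every strict $f\in\mathrm{Hom}(I,J)$. Then there is a unique family of functions $r_\psi:[0,1]^I\times[0,1]\to[0,1]^I\times[0,1]$, indexed by finite sets of names $I$ and $\psi\in\mathbb{F}(I)$, such that: (a) $r_\psi=\mathrm{id}$ if $\psi=1_\mathbb{F}$; (b) $r_\psi=r_\psi\circ r_I$ if $\psi\neq 1_\mathbb{F}$; (c) $r_\psi(u,z)=(u,z)$ if $z=0$; (d) $r_\psi\circ((ib)\times\mathrm{id})=((ib)\times\mathrm{id})\circ r_{\psi(ib)}$ for all $i\in I$, $b\in\{0,1\}$. Moreover each $r_\psi$ is idempotent and its fixed points are exactly the $(u,z)$ with $\psi u=1$ or $z=0$.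
   Context: Fix a countably infinite set of names. $\mathsf{dM}(J)$ is the free de Morgan algebra on $J$. The cube category $\mathcal{C}$ has finite sets of names as objects; $f\in\mathrm{Hom}(I,J)$ is a map $J\to\mathsf{dM}(I)$, composed by substitution; $f$ is strict if it never takes value $0$ or $1$. Using the de Morgan algebra $([0,1],\min,\max,1-x)$, $f\in\mathrm{Hom}(I,J)$ induces $f:[0,1]^I\to[0,1]^J$, $(fu)_j=f(j)$ evaluated at $u$. For $i\in I$ and $b\in\{0,1\}$, the face map $(ib)\in\mathrm{Hom}(I-\{i\},I)$ sends $i\mapsto b$ and $j\mapsto j$ otherwise; it induces $[0,1]^{I-\{i\}}\to[0,1]^I$ inserting the value $b$ at coordinate $i$. The face lattice $\mathbb{F}$ is the distributive lattice generated by $(i=0),(i=1)$ for names $i$ subject to $(i=0)\wedge(i=1)=0_\mathbb{F}$; $\mathbb{F}(I)$ is the sublattice generated by generators with $i\in I$. For $\psi\in\mathbb{F}(I)$ and $u\in[0,1]^I$, the truth value $\psi u$ is computed by interpreting $(i=0)$ as "$u_i=0$", $(i=1)$ as "$u_i=1$", $\wedge,\vee$ as conjunction/disjunction. $\psi(ib)\in\mathbb{F}(I-\{i\})$ is obtained by substituting $(i=b)\mapsto1_\mathbb{F}$, $(i=1-b)\mapsto 0_\mathbb{F}$. $\partial_I=\bigvee_{i\in I}((i=0)\vee(i=1))$, so $\partial_I u=1$ iff some $u_i\in\{0,1\}$. *)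

theory Defs
  imports Complex_Main
begin

type_synonym name = nat

datatype dm = DVar name | DZero | DOne | DMeet dm dm | DJoin dm dm | DNeg dm

fun dm_vars :: "dm \<Rightarrow> name set" where
  "dm_vars (DVar i) = {i}"
| "dm_vars DZero = {}"
| "dm_vars DOne = {}"
| "dm_vars (DMeet a b) = dm_vars a \<union> dm_vars b"
| "dm_vars (DJoin a b) = dm_vars a \<union> dm_vars b"
| "dm_vars (DNeg a) = dm_vars a"

text \<open>Equality in the free de Morgan algebra: the least congruence containing the
  axioms of bounded distributive lattices with an involutive de Morgan negation.\<close>
inductive dm_eq :: "dm \<Rightarrow> dm \<Rightarrow> bool" where
  dm_refl: "dm_eq a a"
| dm_sym: "dm_eq a b \<Longrightarrow> dm_eq b a"
| dm_trans: "dm_eq a b \<Longrightarrow> dm_eq b c \<Longrightarrow> dm_eq a c"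
| dm_cong_meet: "dm_eq a a' \<Longrightarrow> dm_eq b b' \<Longrightarrow> dm_eq (DMeet a b) (DMeet a' b')"
| dm_cong_join: "dm_eq a a' \<Longrightarrow> dm_eq b b' \<Longrightarrow> dm_eq (DJoin a b) (DJoin a' b')"
| dm_cong_neg: "dm_eq a a' \<Longrightarrow> dm_eq (DNeg a) (DNeg a')"
| dm_meet_assoc: "dm_eq (DMeet (DMeet a b) c) (DMeet a (DMeet b c))"
| dm_join_assoc: "dm_eq (DJoin (DJoin a b) c) (DJoin a (DJoin b c))"
| dm_meet_comm: "dm_eq (DMeet a b) (DMeet b a)"
| dm_join_comm: "dm_eq (DJoin a b) (DJoin b a)"
| dm_absorb1: "dm_eq (DMeet a (DJoin a b)) a"
| dm_absorb2: "dm_eq (DJoin a (DMeet a b)) a"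
| dm_distrib1: "dm_eq (DMeet a (DJoin b c)) (DJoin (DMeet a b) (DMeet a c))"
| dm_distrib2: "dm_eq (DJoin a (DMeet b c)) (DMeet (DJoin a b) (DJoin a c))"
| dm_meet_one: "dm_eq (DMeet a DOne) a"
| dm_join_zero: "dm_eq (DJoin a DZero) a"
| dm_meet_zero: "dm_eq (DMeet a DZero) DZero"
| dm_join_one: "dm_eq (DJoin a DOne) DOne"
| dm_neg_neg: "dm_eq (DNeg (DNeg a)) a"
| dm_neg_meet: "dm_eq (DNeg (DMeet a b)) (DJoin (DNeg a) (DNeg b))"
| dm_neg_zero: "dm_eq (DNeg DZero) DOne"
| dm_neg_one: "dm_eq (DNeg DOne) DZero"

fun dm_eval :: "(name \<Rightarrow> real) \<Rightarrow> dm \<Rightarrow> real" where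
  "dm_eval u (DVar i) = u i"
| "dm_eval u DZero = 0"
| "dm_eval u DOne = 1"
| "dm_eval u (DMeet a b) = min (dm_eval u a) (dm_eval u b)"
| "dm_eval u (DJoin a b) = max (dm_eval u a) (dm_eval u b)"
| "dm_eval u (DNeg a) = 1 - dm_eval u a"

text \<open>f \<in> Hom(I,J): a map J \<rightarrow> dM(I) (represented by terms in the variables I).\<close>
definition is_hom :: "name set \<Rightarrow> name set \<Rightarrow> (name \<Rightarrow> dm) \<Rightarrow> bool" where
  "is_hom I J f \<longleftrightarrow> (\<forall>j\<in>J. dm_vars (f j) \<subseteq> I)"

definition strict_hom :: "name set \<Rightarrow> (name \<Rightarrow> dm) \<Rightarrow> bool" where
  "strict_hom J f \<longleftrightarrow> (\<forall>j\<in>J. \<not> dm_eq (f j) DZero \<and> \<not> dm_eq (f j) DOne)"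

definition cube :: "name set \<Rightarrow> (name \<Rightarrow> real) set" where
  "cube I = {u. (\<forall>i\<in>I. 0 \<le> u i \<and> u i \<le> 1) \<and> (\<forall>i. i \<notin> I \<longrightarrow> u i = 0)}"

definition rdom :: "name set \<Rightarrow> ((name \<Rightarrow> real) \<times> real) set" where
  "rdom I = cube I \<times> {0..1}"

definition hom_map :: "name set \<Rightarrow> (name \<Rightarrow> dm) \<Rightarrow> (name \<Rightarrow> real) \<Rightarrow> (name \<Rightarrow> real)" where
  "hom_map J f u = (\<lambda>j. if j \<in> J then dm_eval u (f j) else 0)"

definition face_ins :: "name \<Rightarrow> bool \<Rightarrow> (name \<Rightarrow> real) \<Rightarrow> (name \<Rightarrow> real)" where
  "face_ins i b u = u(i := (if b then 1 else 0))"

definition bdry :: "name set \<Rightarrow> (name \<Rightarrow> real) \<Rightarrow> bool" where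
  "bdry I u \<longleftrightarrow> (\<exists>i\<in>I. u i = 0 \<or> u i = 1)"

datatype face = FEq0 name | FEq1 name | FTop | FBot | FMeet face face | FJoin face face

fun face_vars :: "face \<Rightarrow> name set" where
  "face_vars (FEq0 i) = {i}"
| "face_vars (FEq1 i) = {i}"
| "face_vars FTop = {}"
| "face_vars FBot = {}"
| "face_vars (FMeet a b) = face_vars a \<union> face_vars b"
| "face_vars (FJoin a b) = face_vars a \<union> face_vars b"

inductive face_eq :: "face \<Rightarrow> face \<Rightarrow> bool" where
  fe_refl: "face_eq a a"
| fe_sym: "face_eq a b \<Longrightarrow> face_eq b a"
| fe_trans: "face_eq a b \<Longrightarrow> face_eq b c \<Longrightarrow> face_eq a c"
| fe_cong_meet: "face_eq a a' \<Longrightarrow> face_eq b b' \<Longrightarrow> face_eq (FMeet a b) (FMeet a' b')"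
| fe_cong_join: "face_eq a a' \<Longrightarrow> face_eq b b' \<Longrightarrow> face_eq (FJoin a b) (FJoin a' b')"
| fe_meet_assoc: "face_eq (FMeet (FMeet a b) c) (FMeet a (FMeet b c))"
| fe_join_assoc: "face_eq (FJoin (FJoin a b) c) (FJoin a (FJoin b c))"
| fe_meet_comm: "face_eq (FMeet a b) (FMeet b a)"
| fe_join_comm: "face_eq (FJoin a b) (FJoin b a)"
| fe_absorb1: "face_eq (FMeet a (FJoin a b)) a"
| fe_absorb2: "face_eq (FJoin a (FMeet a b)) a"
| fe_distrib1: "face_eq (FMeet a (FJoin b c)) (FJoin (FMeet a b) (FMeet a c))"
| fe_distrib2: "face_eq (FJoin a (FMeet b c)) (FMeet (FJoin a b) (FJoin a c))"
| fe_meet_top: "face_eq (FMeet a FTop) a"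
| fe_join_bot: "face_eq (FJoin a FBot) a"
| fe_meet_bot: "face_eq (FMeet a FBot) FBot"
| fe_join_top: "face_eq (FJoin a FTop) FTop"
| fe_disj: "face_eq (FMeet (FEq0 i) (FEq1 i)) FBot"

text \<open>psi \<in> F(I): represented by a term in generators with names in I.\<close>
definition in_FI :: "name set \<Rightarrow> face \<Rightarrow> bool" where
  "in_FI I \<psi> \<longleftrightarrow> face_vars \<psi> \<subseteq> I"

fun face_val :: "face \<Rightarrow> (name \<Rightarrow> real) \<Rightarrow> bool" where
  "face_val (FEq0 i) u = (u i = 0)"
| "face_val (FEq1 i) u = (u i = 1)"
| "face_val FTop u = True"
| "face_val FBot u = False"
| "face_val (FMeet a b) u = (face_val a u \<and> face_val b u)"
| "face_val (FJoin a b) u = (face_val a u \<or> face_val b u)"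

fun face_restr :: "face \<Rightarrow> name \<Rightarrow> bool \<Rightarrow> face" where
  "face_restr (FEq0 j) i b = (if j = i then (if b then FBot else FTop) else FEq0 j)"
| "face_restr (FEq1 j) i b = (if j = i then (if b then FTop else FBot) else FEq1 j)"
| "face_restr FTop i b = FTop"
| "face_restr FBot i b = FBot"
| "face_restr (FMeet a c) i b = FMeet (face_restr a i b) (face_restr c i b)"
| "face_restr (FJoin a c) i b = FJoin (face_restr a i b) (face_restr c i b)"

type_synonym pt = "(name \<Rightarrow> real) \<times> real"

definition base_family :: "(name set \<Rightarrow> pt \<Rightarrow> pt) \<Rightarrow> bool" where
  "base_family r \<longleftrightarrow>
    (\<forall>I. finite I \<longrightarrow>
       (\<forall>x\<in>rdom I. r I x \<in> rdom I \<and> r I (r I x) = r I x) \<and>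
       (\<forall>u z. (u, z) \<in> rdom I \<longrightarrow> (r I (u, z) = (u, z) \<longleftrightarrow> bdry I u \<or> z = 0))) \<and>
    (\<forall>I J f. finite I \<longrightarrow> finite J \<longrightarrow> is_hom I J f \<longrightarrow> strict_hom J f \<longrightarrow>
       (\<forall>u z. (u, z) \<in> rdom I \<longrightarrow>
          r J (hom_map J f (fst (r I (u, z))), snd (r I (u, z))) = r J (hom_map J f u, z)))"

text \<open>Conditions on a family r_psi (indexed by finite I and psi \<in> F(I)): well-defined on
  elements of F (independent of representative), maps [0,1]^I\<times>[0,1] into itself, and (a)-(d).\<close>
definition face_family :: "(name set \<Rightarrow> pt \<Rightarrow> pt) \<Rightarrow> (name set \<Rightarrow> face \<Rightarrow> pt \<Rightarrow> pt) \<Rightarrow> bool" where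
  "face_family r rp \<longleftrightarrow>
    (\<forall>I \<psi>. finite I \<longrightarrow> in_FI I \<psi> \<longrightarrow>
       (\<forall>x\<in>rdom I. rp I \<psi> x \<in> rdom I) \<and>
       (\<forall>\<psi>'. in_FI I \<psi>' \<longrightarrow> face_eq \<psi> \<psi>' \<longrightarrow> (\<forall>x\<in>rdom I. rp I \<psi> x = rp I \<psi>' x)) \<and>
       (face_eq \<psi> FTop \<longrightarrow> (\<forall>x\<in>rdom I. rp I \<psi> x = x)) \<and>
       (\<not> face_eq \<psi> FTop \<longrightarrow> (\<forall>x\<in>rdom I. rp I \<psi> x = rp I \<psi> (r I x))) \<and>
       (\<forall>u. (u, 0) \<in> rdom I \<longrightarrow> rp I \<psi> (u, 0) = (u, 0)) \<and>
       (\<forall>i\<in>I. \<forall>b. \<forall>u z. (u, z) \<in> rdom (I - {i}) \<longrightarrow>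
          rp I \<psi> (face_ins i b u, z) =
            (face_ins i b (fst (rp (I - {i}) (face_restr \<psi> i b) (u, z))),
             snd (rp (I - {i}) (face_restr \<psi> i b) (u, z)))))"

end

theory Submission
  imports Defs
begin

section \<open>Face lattice facts\<close>

lemma face_eq_sound: "face_eq a b \<Longrightarrow> face_val a u = face_val b u"
  by (induction rule: face_eq.induct) auto

lemma face_half: "face_val \<psi> (\<lambda>_. 1/2) \<Longrightarrow> face_eq \<psi> FTop"
proof (induction \<psi>)
  case (FMeet a b)
  then have "face_eq (FMeet a b) (FMeet FTop FTop)" by (simp add: fe_cong_meet)
  then show ?case using fe_trans fe_meet_top by blast
next
  case (FJoin a b)
  then show ?case
  proof (cases "face_val a (\<lambda>_. 1/2)")
    case True
    then have "face_eq (FJoin a b) (FJoin FTop b)" using FJoin by (simp add: fe_cong_join fe_refl)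
    moreover have "face_eq (FJoin FTop b) FTop" using fe_trans fe_join_comm fe_join_top by blast
    ultimately show ?thesis using fe_trans by blast
  next
    case False
    then have "face_eq (FJoin a b) (FJoin a FTop)" using FJoin by (simp add: fe_cong_join fe_refl)
    then show ?thesis using fe_trans fe_join_top by blast
  qed
qed (auto intro: fe_refl)

lemma face_val_cong:
  "(\<forall>i\<in>face_vars \<psi>. (u i = 0 \<longleftrightarrow> w i = 0) \<and> (u i = 1 \<longleftrightarrow> w i = 1)) \<Longrightarrow> face_val \<psi> u = face_val \<psi> w"
  by (induction \<psi>) auto

lemma face_val_restr: "face_val (face_restr \<psi> i b) u = face_val \<psi> (face_ins i b u)"
  by (induction \<psi>) (auto simp: face_ins_def)

lemma face_val_restr_fun: "face_val (face_restr \<psi> i b) = (\<lambda>u. face_val \<psi> (face_ins i b u))"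
  by (rule ext) (rule face_val_restr)

lemma face_vars_restr: "face_vars (face_restr \<psi> i b) \<subseteq> face_vars \<psi> - {i}"
  by (induction \<psi>) auto

lemma in_FI_restr: "in_FI I \<psi> \<Longrightarrow> in_FI (I - {i}) (face_restr \<psi> i b)"
  using face_vars_restr unfolding in_FI_def by blast

lemma half_cube: "(\<lambda>i. if i \<in> I then 1/2 else 0) \<in> cube I"
  by (auto simp: cube_def)

lemma top_iff:
  assumes "in_FI I \<psi>"
  shows "(\<forall>u\<in>cube I. face_val \<psi> u) \<longleftrightarrow> face_eq \<psi> FTop"
proof
  assume h: "\<forall>u\<in>cube I. face_val \<psi> u"
  have "face_val \<psi> (\<lambda>i. if i \<in> I then 1/2 else 0)" using h half_cube by blast
  moreover have "face_val \<psi> (\<lambda>i. if i \<in> I then 1/2 else 0) = face_val \<psi> (\<lambda>_. 1/2)"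
    using assms unfolding in_FI_def by (intro face_val_cong) auto
  ultimately show "face_eq \<psi> FTop" using face_half by simp
next
  assume "face_eq \<psi> FTop"
  then show "\<forall>u\<in>cube I. face_val \<psi> u" using face_eq_sound by fastforce
qed

lemma interior_false:
  assumes "in_FI I \<psi>" "\<not> (\<forall>u\<in>cube I. face_val \<psi> u)" "\<not> bdry I u"
  shows "\<not> face_val \<psi> u"
proof
  assume fv: "face_val \<psi> u"
  have "face_val \<psi> u = face_val \<psi> (\<lambda>_. 1/2)"
    using assms(1,3) unfolding in_FI_def bdry_def by (intro face_val_cong) auto
  then have "face_eq \<psi> FTop" using fv face_half by simp
  then show False using assms(2) top_iff[OF assms(1)] by simp
qed

lemma rdom_iff: "(u, z) \<in> rdom I \<longleftrightarrow> u \<in> cube I \<and> 0 \<le> z \<and> z \<le> 1"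
  by (simp add: rdom_def)

lemma cube_minus_i: "u \<in> cube (I - {i}) \<Longrightarrow> u i = 0"
  by (simp add: cube_def)

lemma face_ins_cube: "u \<in> cube (I - {i}) \<Longrightarrow> i \<in> I \<Longrightarrow> face_ins i b u \<in> cube I"
  by (auto simp: cube_def face_ins_def)

lemma upd0_cube: "v \<in> cube I \<Longrightarrow> v(i := 0) \<in> cube (I - {i})"
  by (auto simp: cube_def)

lemma face_ins_upd: "v i = 0 \<or> v i = 1 \<Longrightarrow> face_ins i (v i = 1) (v(i := 0)) = v"
  by (auto simp: face_ins_def)

lemma face_ins_comm: "i \<noteq> j \<Longrightarrow> face_ins i b (face_ins j c u) = face_ins j c (face_ins i b u)"
  by (auto simp: face_ins_def fun_upd_twist)

lemma B1: "base_family r \<Longrightarrow> finite I \<Longrightarrow> x \<in> rdom I \<Longrightarrow> r I x \<in> rdom I"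
  unfolding base_family_def by blast

lemma B2: "base_family r \<Longrightarrow> finite I \<Longrightarrow> x \<in> rdom I \<Longrightarrow> r I (r I x) = r I x"
  unfolding base_family_def by blast

lemma B3: "base_family r \<Longrightarrow> finite I \<Longrightarrow> (u, z) \<in> rdom I \<Longrightarrow> r I (u, z) = (u, z) \<longleftrightarrow> bdry I u \<or> z = 0"
  unfolding base_family_def by blast

lemma B4: "base_family r \<Longrightarrow> finite I \<Longrightarrow> x \<in> rdom I \<Longrightarrow> bdry I (fst (r I x)) \<or> snd (r I x) = 0"
  using B1[of r I x] B2[of r I x] B3[of r I "fst (r I x)" "snd (r I x)"] by simp

section \<open>Construction\<close>

definition pick :: "name set \<Rightarrow> (name \<Rightarrow> real) \<Rightarrow> name" where
  "pick I v = (SOME i. i \<in> I \<and> (v i = 0 \<or> v i = 1))"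

lemma pick: "bdry I v \<Longrightarrow> pick I v \<in> I \<and> (v (pick I v) = 0 \<or> v (pick I v) = 1)"
  unfolding pick_def bdry_def by (rule someI_ex) blast

primrec Rn :: "nat \<Rightarrow> (name set \<Rightarrow> pt \<Rightarrow> pt) \<Rightarrow> name set \<Rightarrow> ((name \<Rightarrow> real) \<Rightarrow> bool) \<Rightarrow> pt \<Rightarrow> pt" where
  "Rn 0 r I P x = (if (\<forall>u\<in>cube I. P u) then x else r I x)"
| "Rn (Suc n) r I P x = (if (\<forall>u\<in>cube I. P u) then x else
     if snd (r I x) = 0 \<or> \<not> bdry I (fst (r I x)) then r I x
     else (let v = fst (r I x); j = pick I v; b = (v j = 1);
               y = Rn n r (I - {j}) (\<lambda>u. P (face_ins j b u)) (v(j := 0), snd (r I x))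
           in (face_ins j b (fst y), snd y)))"

lemma Rn_top: "\<forall>u\<in>cube I. P u \<Longrightarrow> Rn n r I P x = x"
  by (cases n) simp_all

lemma Rn_b: "base_family r \<Longrightarrow> finite I \<Longrightarrow> x \<in> rdom I \<Longrightarrow> \<not> (\<forall>u\<in>cube I. P u) \<Longrightarrow>
   Rn n r I P (r I x) = Rn n r I P x"
proof -
  assume a: "base_family r" "finite I" "x \<in> rdom I" and nt: "\<not> (\<forall>u\<in>cube I. P u)"
  have e: "r I (r I x) = r I x" using B2[OF a] .
  show ?thesis by (cases n) (simp_all only: Rn.simps if_not_P[OF nt] e)
qed

lemma Rn_c: "base_family r \<Longrightarrow> finite I \<Longrightarrow> (u, 0) \<in> rdom I \<Longrightarrow> Rn n r I P (u, 0) = (u, 0)"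
  using B3[of r I u 0] by (cases n) simp_all

lemma Rn_Suc_rec:
  assumes nt: "\<not> (\<forall>u\<in>cube I. P u)" and h: "r I x = (v, z)" and "z \<noteq> 0" "bdry I v"
  shows "Rn (Suc m) r I P x = (face_ins (pick I v) (v (pick I v) = 1)
     (fst (Rn m r (I - {pick I v}) (\<lambda>u. P (face_ins (pick I v) (v (pick I v) = 1) u)) (v(pick I v := 0), z))),
     snd (Rn m r (I - {pick I v}) (\<lambda>u. P (face_ins (pick I v) (v (pick I v) = 1) u)) (v(pick I v := 0), z)))"
proof -
  have c2: "\<not> (snd (r I x) = 0 \<or> \<not> bdry I (fst (r I x)))" using h assms(3,4) by simp
  show ?thesis by (simp only: Rn.simps if_not_P[OF nt] if_not_P[OF c2]) (simp add: Let_def h)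
qed

lemma Rn_Suc_nr: "\<not> (\<forall>u\<in>cube I. P u) \<Longrightarrow> snd (r I x) = 0 \<or> \<not> bdry I (fst (r I x)) \<Longrightarrow>
   Rn (Suc m) r I P x = r I x"
  by (simp only: Rn.simps if_not_P) simp

lemma Rn_0: "\<not> (\<forall>u\<in>cube I. P u) \<Longrightarrow> Rn 0 r I P x = r I x"
  by (simp only: Rn.simps if_not_P) simp

declare Rn.simps[simp del]

lemma Rn_range:
  assumes bf: "base_family r"
  shows "finite I \<Longrightarrow> card I = n \<Longrightarrow> x \<in> rdom I \<Longrightarrow> Rn n r I P x \<in> rdom I"
proof (induction n arbitrary: I P x)
  case 0
  then show ?case using B1[OF bf] Rn_top[of I P 0 r x] Rn_0[of I P r x] by (cases "\<forall>u\<in>cube I. P u") auto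
next
  case (Suc m)
  show ?case
  proof (cases "(\<forall>u\<in>cube I. P u) \<or> snd (r I x) = 0 \<or> \<not> bdry I (fst (r I x))")
    case True
    then show ?thesis using B1[OF bf Suc.prems(1,3)] Suc.prems(3) Rn_top[of I P "Suc m" r x] Rn_Suc_nr[of I P r x m]
      by (cases "\<forall>u\<in>cube I. P u") auto
  next
    case False
    define v where "v = fst (r I x)"
    define z where "z = snd (r I x)"
    define j where "j = pick I v"
    define b where "b = (v j = 1)"
    have vz: "(v, z) \<in> rdom I" using B1[OF bf Suc.prems(1,3)] by (simp add: v_def z_def)
    have j: "j \<in> I" "v j = 0 \<or> v j = 1" using pick[of I v] False by (auto simp: j_def v_def)
    have r1: "(v(j := 0), z) \<in> rdom (I - {j})" using vz upd0_cube by (auto simp: rdom_iff)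
    have c: "card (I - {j}) = m" using Suc.prems j by simp
    define y where "y = Rn m r (I - {j}) (\<lambda>u. P (face_ins j b u)) (v(j := 0), z)"
    have y: "y \<in> rdom (I - {j})" using Suc.IH[OF _ c r1] Suc.prems(1) by (simp add: y_def)
    have eq: "Rn (Suc m) r I P x = (face_ins j b (fst y), snd y)"
      using Rn_Suc_rec[of I P r x v z m] False by (simp add: y_def v_def z_def j_def b_def)
    show ?thesis unfolding eq using y face_ins_cube[OF _ j(1)]
      by (cases y) (auto simp: rdom_iff)
  qed
qed

lemma Rn_d:
  assumes bf: "base_family r"
  shows "finite I \<Longrightarrow> card I = n \<Longrightarrow> i \<in> I \<Longrightarrow> (u, z) \<in> rdom (I - {i}) \<Longrightarrow>
    Rn n r I P (face_ins i b u, z) =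
     (face_ins i b (fst (Rn (n - 1) r (I - {i}) (\<lambda>w. P (face_ins i b w)) (u, z))),
      snd (Rn (n - 1) r (I - {i}) (\<lambda>w. P (face_ins i b w)) (u, z)))"
proof (induction n arbitrary: I P i b u z)
  case 0
  then show ?case by auto
next
  case (Suc m)
  define v where "v = face_ins i b u"
  have ui: "u i = 0" using Suc.prems(4) cube_minus_i[of u I i] by (simp add: rdom_iff)
  have vI: "v \<in> cube I" using face_ins_cube[OF _ Suc.prems(3)] Suc.prems(4) by (simp add: rdom_iff v_def)
  have vi: "v i = (if b then 1 else 0)" by (simp add: v_def face_ins_def)
  have xr: "(v, z) \<in> rdom I" using vI Suc.prems(4) by (simp add: rdom_iff)
  have bd: "bdry I v" using vi Suc.prems(3) unfolding bdry_def by (cases b) auto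
  have fixv: "r I (v, z) = (v, z)" using B3[OF bf Suc.prems(1) xr] bd by simp
  have cI: "card (I - {i}) = m" using Suc.prems by simp
  have ur: "(u, z) \<in> rdom (I - {i})" by fact
  show ?case
  proof (cases "\<forall>w\<in>cube I. P w")
    case True
    then have "\<forall>w\<in>cube (I - {i}). P (face_ins i b w)" using face_ins_cube[OF _ Suc.prems(3)] by blast
    then show ?thesis using True Rn_top by (simp add: v_def[symmetric])
  next
    case nt: False
    show ?thesis
    proof (cases "z = 0")
      case True
      have xr0: "(v, 0) \<in> rdom I" using xr True by simp
      have L: "Rn (Suc m) r I P (v, 0) = (v, 0)" by (rule Rn_c[OF bf Suc.prems(1) xr0])
      have R: "Rn m r (I - {i}) (\<lambda>w. P (face_ins i b w)) (u, 0) = (u, 0)"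
        by (rule Rn_c[OF bf _ ur[unfolded True]]) (simp add: Suc.prems(1))
      show ?thesis using L R True by (simp add: v_def)
    next
      case zne: False
      define j where "j = pick I v"
      define bj where "bj = (v j = 1)"
      have j: "j \<in> I" "v j = 0 \<or> v j = 1" using pick[OF bd] by (auto simp: j_def)
      have LHS: "Rn (Suc m) r I P (v, z) =
         (face_ins j bj (fst (Rn m r (I - {j}) (\<lambda>w. P (face_ins j bj w)) (v(j := 0), z))),
          snd (Rn m r (I - {j}) (\<lambda>w. P (face_ins j bj w)) (v(j := 0), z)))"
        using Rn_Suc_rec[of I P r "(v, z)" v z m] nt fixv zne bd by (simp add: j_def bj_def)
      show ?thesis
      proof (cases "j = i")
        case True
        have "bj = b" using vi True by (cases b) (auto simp: bj_def)
        moreover have "v(j := 0) = u" using True ui by (auto simp: v_def face_ins_def)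
        ultimately show ?thesis using LHS True by (simp add: v_def[symmetric])
      next
        case ji: False
        define w where "w = u(j := 0)"
        have uI: "u \<in> cube (I - {i})" using ur by (simp add: rdom_iff)
        have wr: "(w, z) \<in> rdom (I - {i} - {j})" using upd0_cube[OF uI] ur by (simp add: rdom_iff w_def)
        have wr': "(w, z) \<in> rdom (I - {j} - {i})" using wr by (metis Diff_insert2 insert_commute)
        have uj: "u j = v j" using ji by (simp add: v_def face_ins_def)
        have u_eq: "u = face_ins j bj w" using face_ins_upd[of u j] uj j(2) by (simp add: w_def bj_def)
        have v_eq: "v(j := 0) = face_ins i b w" using ji
          by (auto simp: v_def w_def face_ins_def fun_upd_twist)
        have cJ: "card (I - {j}) = m" using Suc.prems j by simp
        have jI: "j \<in> I - {i}" using j ji by simp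
        have iJ: "i \<in> I - {j}" using Suc.prems(3) ji by simp
        have IH1: "Rn m r (I - {i}) (\<lambda>w. P (face_ins i b w)) (face_ins j bj w, z) =
           (face_ins j bj (fst (Rn (m - 1) r (I - {i} - {j}) (\<lambda>w'. P (face_ins i b (face_ins j bj w'))) (w, z))),
            snd (Rn (m - 1) r (I - {i} - {j}) (\<lambda>w'. P (face_ins i b (face_ins j bj w'))) (w, z)))"
          using Suc.IH[of "I - {i}" j w z "\<lambda>w. P (face_ins i b w)" bj] Suc.prems(1) cI jI wr by simp
        have IH2: "Rn m r (I - {j}) (\<lambda>w. P (face_ins j bj w)) (face_ins i b w, z) =
           (face_ins i b (fst (Rn (m - 1) r (I - {j} - {i}) (\<lambda>w'. P (face_ins j bj (face_ins i b w'))) (w, z))),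
            snd (Rn (m - 1) r (I - {j} - {i}) (\<lambda>w'. P (face_ins j bj (face_ins i b w'))) (w, z)))"
          using Suc.IH[of "I - {j}" i w z "\<lambda>w. P (face_ins j bj w)" b] Suc.prems(1) cJ iJ wr' by simp
        have s1: "I - {j} - {i} = I - {i} - {j}" by auto
        have s2: "(\<lambda>w'. P (face_ins j bj (face_ins i b w'))) = (\<lambda>w'. P (face_ins i b (face_ins j bj w')))"
          using face_ins_comm[OF ji] by simp
        show ?thesis
          unfolding v_def[symmetric] LHS v_eq IH2 s1 s2
          by (simp add: u_eq IH1 face_ins_comm[OF ji])
      qed
    qed
  qed
qed


lemma Rn_image:
  assumes bf: "base_family r"
  shows "finite I \<Longrightarrow> card I = n \<Longrightarrow> in_FI I \<psi> \<Longrightarrow> x \<in> rdom I \<Longrightarrow>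
    face_val \<psi> (fst (Rn n r I (face_val \<psi>) x)) \<or> snd (Rn n r I (face_val \<psi>) x) = 0"
proof (induction n arbitrary: I \<psi> x)
  case 0
  show ?case
  proof (cases "\<forall>u\<in>cube I. face_val \<psi> u")
    case True
    then show ?thesis using Rn_top[OF True] 0 by (cases x) (auto simp: rdom_iff)
  next
    case False
    have "I = {}" using 0 by simp
    then show ?thesis using Rn_0[OF False] B4[OF bf 0(1,4)] by (simp add: bdry_def)
  qed
next
  case (Suc m)
  show ?case
  proof (cases "\<forall>u\<in>cube I. face_val \<psi> u")
    case True
    then show ?thesis using Rn_top[OF True] Suc.prems by (cases x) (auto simp: rdom_iff)
  next
    case nt: False
    show ?thesis
    proof (cases "snd (r I x) = 0 \<or> \<not> bdry I (fst (r I x))")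
      case True
      then show ?thesis using Rn_Suc_nr[of I "face_val \<psi>" r x m] nt True B4[OF bf Suc.prems(1,4)] by auto
    next
      case False
      define v where "v = fst (r I x)"
      define z where "z = snd (r I x)"
      define j where "j = pick I v"
      define bj where "bj = (v j = 1)"
      have h: "r I x = (v, z)" by (simp add: v_def z_def)
      have zne: "z \<noteq> 0" and bd: "bdry I v" using False by (auto simp: v_def z_def)
      have vz: "(v, z) \<in> rdom I" using B1[OF bf Suc.prems(1,4)] h by simp
      have j: "j \<in> I" "v j = 0 \<or> v j = 1" using pick[OF bd] by (auto simp: j_def)
      have r1: "(v(j := 0), z) \<in> rdom (I - {j})" using vz upd0_cube by (auto simp: rdom_iff)
      have c: "card (I - {j}) = m" using Suc.prems j by simp
      have eq: "Rn (Suc m) r I (face_val \<psi>) x =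
         (face_ins j bj (fst (Rn m r (I - {j}) (face_val (face_restr \<psi> j bj)) (v(j := 0), z))),
          snd (Rn m r (I - {j}) (face_val (face_restr \<psi> j bj)) (v(j := 0), z)))"
        unfolding face_val_restr_fun using Rn_Suc_rec[of I "face_val \<psi>" r _ _ _ m] nt h zne bd by (simp add: j_def bj_def)
      have IH: "face_val (face_restr \<psi> j bj) (fst (Rn m r (I - {j}) (face_val (face_restr \<psi> j bj)) (v(j := 0), z)))
         \<or> snd (Rn m r (I - {j}) (face_val (face_restr \<psi> j bj)) (v(j := 0), z)) = 0"
        using Suc.IH[OF _ c in_FI_restr[OF Suc.prems(3)] r1] Suc.prems(1) by simp
      show ?thesis unfolding eq using IH by (simp add: face_val_restr)
    qed
  qed
qed

lemma Rn_fix: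
  assumes bf: "base_family r"
  shows "finite I \<Longrightarrow> card I = n \<Longrightarrow> in_FI I \<psi> \<Longrightarrow> (u, z) \<in> rdom I \<Longrightarrow> face_val \<psi> u \<Longrightarrow>
    Rn n r I (face_val \<psi>) (u, z) = (u, z)"
proof (induction n arbitrary: I \<psi> u z)
  case (0 I \<psi> u z)
  show ?case
  proof (cases "\<forall>u\<in>cube I. face_val \<psi> u")
    case True
    then show ?thesis using Rn_top[OF True] by simp
  next
    case False
    have "I = {}" using 0 by simp
    then have "\<not> bdry I u" by (simp add: bdry_def)
    then show ?thesis using interior_false[OF 0(3) False] 0(5) by simp
  qed
next
  case (Suc m I \<psi> u z)
  show ?case
  proof (cases "\<forall>u\<in>cube I. face_val \<psi> u")
    case True
    then show ?thesis using Rn_top[OF True] by simp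
  next
    case nt: False
    have bd: "bdry I u" using interior_false[OF Suc.prems(3) nt] Suc.prems(5) by blast
    have h: "r I (u, z) = (u, z)" using B3[OF bf Suc.prems(1,4)] bd by simp
    show ?thesis
    proof (cases "z = 0")
      case True
      then show ?thesis using Rn_c[OF bf Suc.prems(1)] Suc.prems(4) by simp
    next
      case zne: False
      define j where "j = pick I u"
      define bj where "bj = (u j = 1)"
      have j: "j \<in> I" "u j = 0 \<or> u j = 1" using pick[OF bd] by (auto simp: j_def)
      have r1: "(u(j := 0), z) \<in> rdom (I - {j})" using Suc.prems(4) upd0_cube by (auto simp: rdom_iff)
      have c: "card (I - {j}) = m" using Suc.prems j by simp
      have ins: "face_ins j bj (u(j := 0)) = u" using face_ins_upd[of u j] j(2) by (simp add: bj_def)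
      have fv: "face_val (face_restr \<psi> j bj) (u(j := 0))" using Suc.prems(5) ins by (simp add: face_val_restr)
      have eq: "Rn (Suc m) r I (face_val \<psi>) (u, z) =
         (face_ins j bj (fst (Rn m r (I - {j}) (face_val (face_restr \<psi> j bj)) (u(j := 0), z))),
          snd (Rn m r (I - {j}) (face_val (face_restr \<psi> j bj)) (u(j := 0), z)))"
        unfolding face_val_restr_fun using Rn_Suc_rec[of I "face_val \<psi>" r _ _ _ m] nt h zne bd by (simp add: j_def bj_def)
      have IH: "Rn m r (I - {j}) (face_val (face_restr \<psi> j bj)) (u(j := 0), z) = (u(j := 0), z)"
        using Suc.IH[OF finite_Diff[OF Suc.prems(1)] c in_FI_restr[OF Suc.prems(3)] r1 fv] .
      show ?thesis unfolding eq IH using ins by simp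
    qed
  qed
qed


lemma ff_a: "face_family r rp \<Longrightarrow> finite I \<Longrightarrow> in_FI I \<psi> \<Longrightarrow> face_eq \<psi> FTop \<Longrightarrow> x \<in> rdom I \<Longrightarrow> rp I \<psi> x = x"
  unfolding face_family_def by (drule spec[where x=I], drule spec[where x=\<psi>]) blast

lemma ff_b: "face_family r rp \<Longrightarrow> finite I \<Longrightarrow> in_FI I \<psi> \<Longrightarrow> \<not> face_eq \<psi> FTop \<Longrightarrow> x \<in> rdom I \<Longrightarrow> rp I \<psi> x = rp I \<psi> (r I x)"
  unfolding face_family_def by (drule spec[where x=I], drule spec[where x=\<psi>]) blast

lemma ff_c: "face_family r rp \<Longrightarrow> finite I \<Longrightarrow> in_FI I \<psi> \<Longrightarrow> (u, 0) \<in> rdom I \<Longrightarrow> rp I \<psi> (u, 0) = (u, 0)"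
  unfolding face_family_def by (drule spec[where x=I], drule spec[where x=\<psi>]) blast

lemma ff_d: "face_family r rp \<Longrightarrow> finite I \<Longrightarrow> in_FI I \<psi> \<Longrightarrow> i \<in> I \<Longrightarrow> (u, z) \<in> rdom (I - {i}) \<Longrightarrow>
  rp I \<psi> (face_ins i b u, z) = (face_ins i b (fst (rp (I - {i}) (face_restr \<psi> i b) (u, z))), snd (rp (I - {i}) (face_restr \<psi> i b) (u, z)))"
  unfolding face_family_def by (drule spec[where x=I], drule spec[where x=\<psi>]) blast

definition rpf :: "(name set \<Rightarrow> pt \<Rightarrow> pt) \<Rightarrow> name set \<Rightarrow> face \<Rightarrow> pt \<Rightarrow> pt" where
  "rpf r I \<psi> x = Rn (card I) r I (face_val \<psi>) x"

lemma rpf_family: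
  assumes bf: "base_family r"
  shows "face_family r (rpf r)"
  unfolding face_family_def
proof (intro allI impI conjI ballI)
  fix I \<psi> assume fin: "finite I" and fi: "in_FI I \<psi>"
  {
    fix x assume "x \<in> rdom I"
    then show "rpf r I \<psi> x \<in> rdom I" unfolding rpf_def using Rn_range[OF bf fin refl] by blast
  }
  {
    fix \<psi>' x assume "in_FI I \<psi>'" "face_eq \<psi> \<psi>'" "x \<in> rdom I"
    then have "face_val \<psi> = face_val \<psi>'" using face_eq_sound by blast
    then show "rpf r I \<psi> x = rpf r I \<psi>' x" unfolding rpf_def by simp
  }
  {
    fix x assume "face_eq \<psi> FTop" "x \<in> rdom I"
    then show "rpf r I \<psi> x = x" unfolding rpf_def using top_iff[OF fi] Rn_top by blast
  }
  {
    fix x assume "\<not> face_eq \<psi> FTop" "x \<in> rdom I"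
    then show "rpf r I \<psi> x = rpf r I \<psi> (r I x)" unfolding rpf_def
      using top_iff[OF fi] Rn_b[OF bf fin] by metis
  }
  {
    fix u assume "(u, 0::real) \<in> rdom I"
    then show "rpf r I \<psi> (u, 0) = (u, 0)" unfolding rpf_def using Rn_c[OF bf fin] by blast
  }
  {
    fix i b u z assume i: "i \<in> I" and uz: "(u, z) \<in> rdom (I - {i})"
    have c: "card (I - {i}) = card I - 1" using i fin by simp
    show "rpf r I \<psi> (face_ins i b u, z) =
          (face_ins i b (fst (rpf r (I - {i}) (face_restr \<psi> i b) (u, z))), snd (rpf r (I - {i}) (face_restr \<psi> i b) (u, z)))"
      unfolding rpf_def c face_val_restr_fun using Rn_d[OF bf fin refl i uz] by simp
  }
qed

lemma rpf_uniq:
  assumes bf: "base_family r" and ff: "face_family r rp'"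
  shows "finite I \<Longrightarrow> in_FI I \<psi> \<Longrightarrow> x \<in> rdom I \<Longrightarrow> rp' I \<psi> x = rpf r I \<psi> x"
proof (induction "card I" arbitrary: I \<psi> x rule: less_induct)
  case less
  have ff0: "face_family r (rpf r)" using rpf_family[OF bf] .
  show ?case
  proof (cases "face_eq \<psi> FTop")
    case True
    then show ?thesis using ff_a[OF ff less.prems(1,2) True less.prems(3)] ff_a[OF ff0 less.prems(1,2) True less.prems(3)] by simp
  next
    case nt: False
    define v where "v = fst (r I x)"
    define z where "z = snd (r I x)"
    have h: "r I x = (v, z)" by (simp add: v_def z_def)
    have vz: "(v, z) \<in> rdom I" using B1[OF bf less.prems(1,3)] h by simp
    have e1: "rp' I \<psi> x = rp' I \<psi> (v, z)" using ff_b[OF ff less.prems(1,2) nt less.prems(3)] h by simp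
    have e2: "rpf r I \<psi> x = rpf r I \<psi> (v, z)" using ff_b[OF ff0 less.prems(1,2) nt less.prems(3)] h by simp
    show ?thesis
    proof (cases "z = 0")
      case True
      then show ?thesis unfolding e1 e2 using ff_c[OF ff less.prems(1,2)] ff_c[OF ff0 less.prems(1,2)] vz by simp
    next
      case False
      have bd: "bdry I v" using B4[OF bf less.prems(1,3)] h False by simp
      define j where "j = pick I v"
      define bj where "bj = (v j = 1)"
      have j: "j \<in> I" "v j = 0 \<or> v j = 1" using pick[OF bd] by (auto simp: j_def)
      define w where "w = v(j := 0)"
      have wr: "(w, z) \<in> rdom (I - {j})" using vz upd0_cube by (auto simp: rdom_iff w_def)
      have ins: "face_ins j bj w = v" using face_ins_upd[of v j] j(2) by (simp add: bj_def w_def)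
      have lt: "card (I - {j}) < card I" using j(1) less.prems(1) by (intro card_Diff1_less)
      have IH: "rp' (I - {j}) (face_restr \<psi> j bj) (w, z) = rpf r (I - {j}) (face_restr \<psi> j bj) (w, z)"
        using less.hyps[OF lt finite_Diff[OF less.prems(1)] in_FI_restr[OF less.prems(2)] wr] .
      show ?thesis unfolding e1 e2 ins[symmetric]
        using ff_d[OF ff less.prems(1,2) j(1) wr, of bj] ff_d[OF ff0 less.prems(1,2) j(1) wr, of bj] IH by simp
    qed
  qed
qed

theorem mainTheorem5:
  fixes r :: "name set \<Rightarrow> pt \<Rightarrow> pt"
  assumes "base_family r"
  shows "\<exists>rp. face_family r rp
           \<and> (\<forall>rp'. face_family r rp' \<longrightarrow>
                (\<forall>I \<psi>. finite I \<longrightarrow> in_FI I \<psi> \<longrightarrow> (\<forall>x\<in>rdom I. rp' I \<psi> x = rp I \<psi> x)))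
           \<and> (\<forall>I \<psi>. finite I \<longrightarrow> in_FI I \<psi> \<longrightarrow>
                (\<forall>x\<in>rdom I. rp I \<psi> (rp I \<psi> x) = rp I \<psi> x) \<and>
                (\<forall>u z. (u, z) \<in> rdom I \<longrightarrow> (rp I \<psi> (u, z) = (u, z) \<longleftrightarrow> face_val \<psi> u \<or> z = 0)))"
proof (intro exI conjI allI impI ballI)
  note bf = assms
  show "face_family r (rpf r)" using rpf_family[OF bf] .
  {
    fix rp' I \<psi> x assume "face_family r rp'" "finite I" "in_FI I \<psi>" "x \<in> rdom I"
    then show "rp' I \<psi> x = rpf r I \<psi> x" using rpf_uniq[OF bf] by blast
  }
  {
    fix I \<psi> assume fin: "finite I" and fi: "in_FI I \<psi>"
    have fixiff: "rpf r I \<psi> (u, z) = (u, z) \<longleftrightarrow> face_val \<psi> u \<or> z = 0" if uz: "(u, z) \<in> rdom I" for u z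
    proof
      assume "rpf r I \<psi> (u, z) = (u, z)"
      then show "face_val \<psi> u \<or> z = 0" using Rn_image[OF bf fin refl fi uz] unfolding rpf_def by simp
    next
      assume "face_val \<psi> u \<or> z = 0"
      then show "rpf r I \<psi> (u, z) = (u, z)" unfolding rpf_def
        using Rn_fix[OF bf fin refl fi uz] Rn_c[OF bf fin] uz by auto
    qed
    {
      fix u z assume "(u, z) \<in> rdom I"
      then show "rpf r I \<psi> (u, z) = (u, z) \<longleftrightarrow> face_val \<psi> u \<or> z = 0" by (rule fixiff)
    }
    {
      fix x assume x: "x \<in> rdom I"
      define y where "y = rpf r I \<psi> x"
      have yr: "y \<in> rdom I" using Rn_range[OF bf fin refl x] by (simp add: y_def rpf_def)
      have "face_val \<psi> (fst y) \<or> snd y = 0" using Rn_image[OF bf fin refl fi x] by (simp add: y_def rpf_def)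
      then have "rpf r I \<psi> (fst y, snd y) = (fst y, snd y)" using fixiff[of "fst y" "snd y"] yr by simp
      then show "rpf r I \<psi> (rpf r I \<psi> x) = rpf r I \<psi> x" by (simp add: y_def)
    }
  }
qed

end
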